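(* Let $\sigma_1,\sigma_2$ be convex polytopes in a Euclidean vector space $\mathbb{E}$, let $\sigma$ be the convex hull of some of the vertices of $\sigma_1\times\sigma_2\subseteq\mathbb{E}\times\mathbb{E}$, and let $\pi\colon\mathbb{E}\times\mathbb{E}\to\mathbb{E}$, $\pi(x,y)=x-y$. If $D_1$ is sufficiently rich for $\sigma_1$ and $D_2$ is sufficiently rich for $\sigma_2$, then $(D_1+D_2)\cup D_1\cup D_2$ is sufficiently rich for $\pi(\sigma)$; in particular it is sufficiently rich for $\sigma_1-\sigma_2$.
   Context: A finite set $D$ is sufficiently rich for a polytope $\tau$ if $w-v\in D$ for any two distinct vertices $v,w$ of $\tau$. $D_1+D_2$ and $\sigma_1-\sigma_2$ denote Minkowski sum and difference. *)

theory Defs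
  imports "HOL-Analysis.Analysis"
begin

definition vertices :: "'a::real_vector set \<Rightarrow> 'a set" where
  "vertices \<tau> = {v. v extreme_point_of \<tau>}"

definition sufficiently_rich :: "'a::real_vector set \<Rightarrow> 'a set \<Rightarrow> bool" where
  "sufficiently_rich D \<tau> \<longleftrightarrow> finite D \<and>
     (\<forall>v\<in>vertices \<tau>. \<forall>w\<in>vertices \<tau>. v \<noteq> w \<longrightarrow> w - v \<in> D)"

definition minkowski_sum :: "'a::real_vector set \<Rightarrow> 'a set \<Rightarrow> 'a set" where
  "minkowski_sum A B = {a + b | a b. a \<in> A \<and> b \<in> B}"

definition minkowski_diff :: "'a::real_vector set \<Rightarrow> 'a set \<Rightarrow> 'a set" where
  "minkowski_diff A B = {a - b | a b. a \<in> A \<and> b \<in> B}"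

end

theory Submission
  imports Defs
begin

lemma prod_extreme:
  assumes "(v1, v2) extreme_point_of (S \<times> T)"
  shows "v1 extreme_point_of S \<and> v2 extreme_point_of T"
proof -
  have m: "v1 \<in> S" "v2 \<in> T" using assms by (auto simp: extreme_point_of_def)
  have "v1 extreme_point_of S"
    unfolding extreme_point_of_def
  proof (intro conjI m ballI)
    fix a b assume ab: "a \<in> S" "b \<in> S"
    show "v1 \<notin> open_segment a b"
    proof
      assume "v1 \<in> open_segment a b"
      then obtain u where "a \<noteq> b" "0 < u" "u < 1" "v1 = (1 - u) *\<^sub>R a + u *\<^sub>R b"
        by (auto simp: in_segment)
      then have "(v1, v2) \<in> open_segment (a, v2) (b, v2)"
        unfolding in_segment by (auto intro!: exI[of _ u] simp: algebra_simps)
      moreover have "(a, v2) \<in> S \<times> T" "(b, v2) \<in> S \<times> T" using ab m by auto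
      ultimately show False using assms by (auto simp: extreme_point_of_def)
    qed
  qed
  moreover have "v2 extreme_point_of T"
    unfolding extreme_point_of_def
  proof (intro conjI m ballI)
    fix a b assume ab: "a \<in> T" "b \<in> T"
    show "v2 \<notin> open_segment a b"
    proof
      assume "v2 \<in> open_segment a b"
      then obtain u where "a \<noteq> b" "0 < u" "u < 1" "v2 = (1 - u) *\<^sub>R a + u *\<^sub>R b"
        by (auto simp: in_segment)
      then have "(v1, v2) \<in> open_segment (v1, a) (v1, b)"
        unfolding in_segment by (auto intro!: exI[of _ u] simp: algebra_simps)
      moreover have "(v1, a) \<in> S \<times> T" "(v1, b) \<in> S \<times> T" using ab m by auto
      ultimately show False using assms by (auto simp: extreme_point_of_def)
    qed
  qed
  ultimately show ?thesis by blast
qed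

lemma lin_pi: "linear (\<lambda>(x::'a::real_vector, y). x - y)"
  by (rule linearI) (auto simp: algebra_simps)

lemma main_aux:
  fixes \<sigma>1 \<sigma>2 :: "'a::euclidean_space set"
  assumes V: "V \<subseteq> vertices (\<sigma>1 \<times> \<sigma>2)"
    and r1: "sufficiently_rich D1 \<sigma>1" and r2: "sufficiently_rich D2 \<sigma>2"
  shows "sufficiently_rich (minkowski_sum D1 D2 \<union> D1 \<union> D2) ((\<lambda>(x, y). x - y) ` (convex hull V))"
proof -
  let ?p = "\<lambda>(x::'a, y). x - y"
  have img: "?p ` (convex hull V) = convex hull (?p ` V)"
    by (rule convex_hull_linear_image[OF lin_pi])
  have vert: "vertices (?p ` (convex hull V)) \<subseteq> ?p ` V"
    unfolding img vertices_def using extreme_points_of_convex_hull by blast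
  have fin: "finite (minkowski_sum D1 D2)"
  proof -
    have "minkowski_sum D1 D2 = (\<lambda>(a,b). a + b) ` (D1 \<times> D2)"
      unfolding minkowski_sum_def by auto
    thus ?thesis using r1 r2 by (simp add: sufficiently_rich_def)
  qed
  show ?thesis
    unfolding sufficiently_rich_def
  proof (intro conjI ballI impI)
    show "finite (minkowski_sum D1 D2 \<union> D1 \<union> D2)" using fin r1 r2
      by (simp add: sufficiently_rich_def)
  next
    fix p q assume p: "p \<in> vertices (?p ` (convex hull V))"
      and q: "q \<in> vertices (?p ` (convex hull V))" and pq: "p \<noteq> q"
    obtain v1 v2 where v: "(v1, v2) \<in> V" "p = v1 - v2" using p vert by auto
    obtain w1 w2 where w: "(w1, w2) \<in> V" "q = w1 - w2" using q vert by auto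
    have ev: "v1 \<in> vertices \<sigma>1" "v2 \<in> vertices \<sigma>2"
      using prod_extreme[of v1 v2 \<sigma>1 \<sigma>2] v(1) V by (auto simp: vertices_def)
    have ew: "w1 \<in> vertices \<sigma>1" "w2 \<in> vertices \<sigma>2"
      using prod_extreme[of w1 w2 \<sigma>1 \<sigma>2] w(1) V by (auto simp: vertices_def)
    have eq: "q - p = (w1 - v1) + (v2 - w2)" using v w by (simp add: algebra_simps)
    show "q - p \<in> minkowski_sum D1 D2 \<union> D1 \<union> D2"
    proof (cases "w1 = v1")
      case True
      then have "v2 \<noteq> w2" using pq v w by auto
      then have "v2 - w2 \<in> D2" using r2 ev ew by (auto simp: sufficiently_rich_def)
      then show ?thesis using eq True by simp
    next
      case False
      then have d1: "w1 - v1 \<in> D1" using r1 ev ew by (auto simp: sufficiently_rich_def)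
      show ?thesis
      proof (cases "v2 = w2")
        case True then show ?thesis using eq d1 by simp
      next
        case False
        then have "v2 - w2 \<in> D2" using r2 ev ew by (auto simp: sufficiently_rich_def)
        then show ?thesis using eq d1 unfolding minkowski_sum_def by blast
      qed
    qed
  qed
qed

theorem mainTheorem17:
  fixes \<sigma>1 \<sigma>2 :: "'a::euclidean_space set"
    and \<sigma> :: "('a \<times> 'a) set"
    and D1 D2 :: "'a set"
  assumes "polytope \<sigma>1" and "polytope \<sigma>2"
    and "\<exists>V. V \<subseteq> vertices (\<sigma>1 \<times> \<sigma>2) \<and> \<sigma> = convex hull V"
    and "sufficiently_rich D1 \<sigma>1" and "sufficiently_rich D2 \<sigma>2"
  shows "sufficiently_rich (minkowski_sum D1 D2 \<union> D1 \<union> D2) ((\<lambda>(x, y). x - y) ` \<sigma>)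
       \<and> sufficiently_rich (minkowski_sum D1 D2 \<union> D1 \<union> D2) (minkowski_diff \<sigma>1 \<sigma>2)"
proof
  obtain V where "V \<subseteq> vertices (\<sigma>1 \<times> \<sigma>2)" "\<sigma> = convex hull V" using assms(3) by blast
  then show "sufficiently_rich (minkowski_sum D1 D2 \<union> D1 \<union> D2) ((\<lambda>(x, y). x - y) ` \<sigma>)"
    using main_aux assms(4,5) by blast
next
  have c: "compact (\<sigma>1 \<times> \<sigma>2)" "convex (\<sigma>1 \<times> \<sigma>2)"
    using assms(1,2) by (auto intro: compact_Times convex_Times polytope_imp_compact polytope_imp_convex)
  have km: "\<sigma>1 \<times> \<sigma>2 = convex hull (vertices (\<sigma>1 \<times> \<sigma>2))"
    unfolding vertices_def using Krein_Milman_Minkowski[OF c] .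
  have md: "minkowski_diff \<sigma>1 \<sigma>2 = (\<lambda>(x, y). x - y) ` (\<sigma>1 \<times> \<sigma>2)"
    unfolding minkowski_diff_def by auto
  show "sufficiently_rich (minkowski_sum D1 D2 \<union> D1 \<union> D2) (minkowski_diff \<sigma>1 \<sigma>2)"
    unfolding md using main_aux[OF order_refl assms(4,5)] km by metis
qed

end
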